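(* Fix $\gamma>0$. Let $\{\psi^t\}$ be any feasible family and $|V^0| = \max_{t\in\mathcal{T}}|V^t|$. Define the simultaneously updated potentials $$\hat\psi^t_i(l) = \psi^t_i(l) - \frac{1}{|V^0|}\Big(\nu^t_i(l) - \tfrac{1}{|\mathcal{T}(i)|}\sum_{\bar t\in\mathcal{T}(i)}\nu^{\bar t}_i(l)\Big), \qquad \forall i\in V,\ t\in\mathcal{T}(i),\ l\in\mathcal{L},$$ with all smoothed max-marginals computed from the pre-update potentials. Then $\{\hat\psi^t\}$ is feasible and $D_\gamma(\{\hat\psi^t\}) \le D_\gamma(\{\psi^t\})$.
   Context: Let $G=(V,E)$ be a finite graph and $\mathcal{L}=\{1,\dots,L\}$ a finite label set. Unary scores $\psi_i \in \mathbb{R}^{\mathcal{L}}$ ($i \in V$) and pairwise scores $\phi_{ij} \in \mathbb{R}^{\mathcal{L}\times\mathcal{L}}$ ($ij \in E$) are given. Let $\mathcal{T}$ be a finite collection of trees (sub-problems), each tree $t$ being a subgraph of $G$ with vertex set $V^t$ and edge set $E^t \subseteq E$, such that every vertex of $V$ lies in at least one tree and every edge of $E$ lies in exactly one tree. Write $\mathcal{T}(i) = \{t \in \mathcal{T} : i \in V^t\}$. Each sub-problem $t$ carries unary potentials $\psi^t_i \in \mathbb{R}^{\mathcal{L}}$ for $i \in V^t$; the family $\{\psi^t\}$ is called feasible if $\sum_{t \in \mathcal{T}(i)} \psi^t_i = \psi_i$ for every $i \in V$. For a labeling $x : V^t \to \mathcal{L}$ define the tree energy $E^t(x) = \sum_{i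 \in V^t} \psi^t_i(x_i) + \sum_{ij \in E^t} \phi_{ij}(x_i,x_j)$. For a parameter $\gamma>0$, the smoothed max-energy of sub-problem $t$ is $\nu^t = \gamma \log \sum_{x : V^t\to\mathcal{L}} \exp(E^t(x)/\gamma)$, and for $i\in V^t$, $l\in\mathcal{L}$ the smoothed max-marginal is $\nu^t_i(l) = \gamma\log\sum_{x:V^t\to\mathcal{L},\ x_i=l}\exp(E^t(x)/\gamma)$. The smoothed dual objective is $D_\gamma(\{\psi^t\}) = \sum_{t \in \mathcal{T}} \nu^t$. *)

theory Defs
  imports Complex_Main "HOL-Library.FuncSet"
begin

text \<open>Undirected edges are stored as ordered pairs (i,j); the pairwise score of edge ij is
  phi i j, a function on label pairs.\<close>

definition adj_sym :: "('v \<times> 'v) set \<Rightarrow> ('v \<times> 'v) set" where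
  "adj_sym Et = Et \<union> {(j, i) | i j. (i, j) \<in> Et}"

definition is_tree :: "'v set \<Rightarrow> ('v \<times> 'v) set \<Rightarrow> bool" where
  "is_tree Vt Et \<longleftrightarrow> finite Vt \<and> Vt \<noteq> {} \<and> Et \<subseteq> Vt \<times> Vt
     \<and> (\<forall>(i, j) \<in> Et. i \<noteq> j)
     \<and> inj_on (\<lambda>(i, j). {i, j}) Et
     \<and> card Et + 1 = card Vt
     \<and> (\<forall>i \<in> Vt. \<forall>j \<in> Vt. (i, j) \<in> (adj_sym Et)\<^sup>*)"

definition labelings :: "'v set \<Rightarrow> 'l set \<Rightarrow> ('v \<Rightarrow> 'l) set" where
  "labelings Vt Ls = Pi\<^sub>E Vt (\<lambda>_. Ls)"

definition tree_energy ::
  "'v set \<Rightarrow> ('v \<times> 'v) set \<Rightarrow> ('v \<Rightarrow> 'l \<Rightarrow> real) \<Rightarrow> ('v \<Rightarrow> 'v \<Rightarrow> 'l \<Rightarrow> 'l \<Rightarrow> real)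
   \<Rightarrow> ('v \<Rightarrow> 'l) \<Rightarrow> real" where
  "tree_energy Vt Et psit phi x =
     (\<Sum>i\<in>Vt. psit i (x i)) + (\<Sum>(i, j)\<in>Et. phi i j (x i) (x j))"

definition smooth_max_energy ::
  "real \<Rightarrow> 'l set \<Rightarrow> 'v set \<Rightarrow> ('v \<times> 'v) set \<Rightarrow> ('v \<Rightarrow> 'l \<Rightarrow> real)
   \<Rightarrow> ('v \<Rightarrow> 'v \<Rightarrow> 'l \<Rightarrow> 'l \<Rightarrow> real) \<Rightarrow> real" where
  "smooth_max_energy \<gamma> Ls Vt Et psit phi =
     \<gamma> * ln (\<Sum>x\<in>labelings Vt Ls. exp (tree_energy Vt Et psit phi x / \<gamma>))"

definition smooth_max_marginal ::
  "real \<Rightarrow> 'l set \<Rightarrow> 'v set \<Rightarrow> ('v \<times> 'v) set \<Rightarrow> ('v \<Rightarrow> 'l \<Rightarrow> real)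
   \<Rightarrow> ('v \<Rightarrow> 'v \<Rightarrow> 'l \<Rightarrow> 'l \<Rightarrow> real) \<Rightarrow> 'v \<Rightarrow> 'l \<Rightarrow> real" where
  "smooth_max_marginal \<gamma> Ls Vt Et psit phi i l =
     \<gamma> * ln (\<Sum>x\<in>{x \<in> labelings Vt Ls. x i = l}. exp (tree_energy Vt Et psit phi x / \<gamma>))"

definition trees_at :: "'t set \<Rightarrow> ('t \<Rightarrow> 'v set) \<Rightarrow> 'v \<Rightarrow> 't set" where
  "trees_at T Vt i = {t \<in> T. i \<in> Vt t}"

definition feasible ::
  "'v set \<Rightarrow> 'l set \<Rightarrow> 't set \<Rightarrow> ('t \<Rightarrow> 'v set) \<Rightarrow> ('v \<Rightarrow> 'l \<Rightarrow> real)
   \<Rightarrow> ('t \<Rightarrow> 'v \<Rightarrow> 'l \<Rightarrow> real) \<Rightarrow> bool" where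
  "feasible V Ls T Vt psi psiT \<longleftrightarrow>
     (\<forall>i\<in>V. \<forall>l\<in>Ls. (\<Sum>t\<in>trees_at T Vt i. psiT t i l) = psi i l)"

definition smooth_dual ::
  "real \<Rightarrow> 'l set \<Rightarrow> 't set \<Rightarrow> ('t \<Rightarrow> 'v set) \<Rightarrow> ('t \<Rightarrow> ('v \<times> 'v) set)
   \<Rightarrow> ('v \<Rightarrow> 'v \<Rightarrow> 'l \<Rightarrow> 'l \<Rightarrow> real) \<Rightarrow> ('t \<Rightarrow> 'v \<Rightarrow> 'l \<Rightarrow> real) \<Rightarrow> real" where
  "smooth_dual \<gamma> Ls T Vt Et phi psiT =
     (\<Sum>t\<in>T. smooth_max_energy \<gamma> Ls (Vt t) (Et t) (psiT t) phi)"

end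

theory Submission imports Defs "HOL-Analysis.Convex" begin

lemma lse_convex:
  fixes f :: "'k \<Rightarrow> 'a \<Rightarrow> real"
  assumes X: "finite X" "X \<noteq> {}" and K: "finite K" and w: "\<forall>k\<in>K. w k \<ge> 0" "sum w K = 1"
  shows "ln (\<Sum>x\<in>X. exp (\<Sum>k\<in>K. w k * f k x)) \<le> (\<Sum>k\<in>K. w k * ln (\<Sum>x\<in>X. exp (f k x)))"
proof -
  define c where "c k = ln (\<Sum>x\<in>X. exp (f k x))" for k
  have Spos: "(\<Sum>x\<in>X. exp (f k x)) > 0" for k using X by (intro sum_pos) auto
  have expc: "exp (c k) = (\<Sum>x\<in>X. exp (f k x))" for k using Spos[of k] c_def by simp
  define g where "g k x = f k x - c k" for k x
  have sumg: "(\<Sum>x\<in>X. exp (g k x)) = 1" for k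
  proof -
    have "(\<Sum>x\<in>X. exp (g k x)) = (\<Sum>x\<in>X. exp (f k x)) / exp (c k)"
      by (simp add: g_def exp_diff sum_divide_distrib)
    then show ?thesis using expc[of k] Spos[of k] by simp
  qed
  have Kne: "K \<noteq> {}" using w by auto
  have jensen: "exp (\<Sum>k\<in>K. w k * g k x) \<le> (\<Sum>k\<in>K. w k * exp (g k x))" for x
    using convex_on_sum[OF K Kne exp_convex w(2), of "\<lambda>k. g k x"] w(1) by auto
  have "(\<Sum>x\<in>X. exp (\<Sum>k\<in>K. w k * g k x)) \<le> (\<Sum>x\<in>X. \<Sum>k\<in>K. w k * exp (g k x))"
    by (rule sum_mono) (rule jensen)
  also have "\<dots> = (\<Sum>k\<in>K. w k * (\<Sum>x\<in>X. exp (g k x)))"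
    by (subst sum.swap) (simp add: sum_distrib_left)
  also have "\<dots> = 1" using sumg w(2) by simp
  finally have le1: "(\<Sum>x\<in>X. exp (\<Sum>k\<in>K. w k * g k x)) \<le> 1" .
  have pos: "(\<Sum>x\<in>X. exp (\<Sum>k\<in>K. w k * g k x)) > 0" using X by (intro sum_pos) auto
  have dec: "(\<Sum>k\<in>K. w k * f k x) = (\<Sum>k\<in>K. w k * g k x) + (\<Sum>k\<in>K. w k * c k)" for x
    by (simp add: g_def algebra_simps sum.distrib sum_subtractf)
  have "(\<Sum>x\<in>X. exp (\<Sum>k\<in>K. w k * f k x)) = exp (\<Sum>k\<in>K. w k * c k) * (\<Sum>x\<in>X. exp (\<Sum>k\<in>K. w k * g k x))"
    by (simp add: dec exp_add sum_distrib_left mult.commute)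
  then have "ln (\<Sum>x\<in>X. exp (\<Sum>k\<in>K. w k * f k x)) = (\<Sum>k\<in>K. w k * c k) + ln (\<Sum>x\<in>X. exp (\<Sum>k\<in>K. w k * g k x))"
    using pos by (simp add: ln_mult)
  also have "\<dots> \<le> (\<Sum>k\<in>K. w k * c k)" using le1 pos by simp
  finally show ?thesis by (simp add: c_def)
qed
lemma group_label:
  assumes "finite Vt" "finite Ls" "i \<in> Vt"
  shows "(\<Sum>x\<in>labelings Vt Ls. h x) = (\<Sum>l\<in>Ls. \<Sum>x\<in>{x\<in>labelings Vt Ls. x i = l}. h x)"
proof -
  have fin: "finite (labelings Vt Ls)" using assms by (simp add: labelings_def finite_PiE)
  have "(\<lambda>x. x i) ` labelings Vt Ls \<subseteq> Ls" using assms by (auto simp: labelings_def)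
  from sum.group[OF fin assms(2) this, of h] show ?thesis by simp
qed

lemma fiber_ne:
  assumes "l \<in> Ls" "i \<in> Vt"
  shows "{x\<in>labelings Vt Ls. x i = l} \<noteq> {}"
proof -
  have "restrict (\<lambda>_. l) Vt \<in> {x\<in>labelings Vt Ls. x i = l}"
    using assms by (auto simp: labelings_def)
  then show ?thesis by blast
qed

theorem theorem2:
  fixes V :: "'v set" and E :: "('v \<times> 'v) set" and Ls :: "'l set"
    and T :: "'t set" and Vt :: "'t \<Rightarrow> 'v set" and Et :: "'t \<Rightarrow> ('v \<times> 'v) set"
    and psi :: "'v \<Rightarrow> 'l \<Rightarrow> real" and phi :: "'v \<Rightarrow> 'v \<Rightarrow> 'l \<Rightarrow> 'l \<Rightarrow> real"
    and psiT psiT_hat :: "'t \<Rightarrow> 'v \<Rightarrow> 'l \<Rightarrow> real" and \<gamma> :: real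
  assumes finV: "finite V" and E_sub: "E \<subseteq> V \<times> V"
    and finL: "finite Ls" and neL: "Ls \<noteq> {}"
    and finT: "finite T"
    and trees: "\<forall>t\<in>T. is_tree (Vt t) (Et t) \<and> Vt t \<subseteq> V \<and> Et t \<subseteq> E"
    and cover_V: "\<forall>i\<in>V. \<exists>t\<in>T. i \<in> Vt t"
    and cover_E: "\<forall>e\<in>E. \<exists>!t. t \<in> T \<and> e \<in> Et t"
    and gamma_pos: "\<gamma> > 0"
    and feas: "feasible V Ls T Vt psi psiT"
    and upd: "\<forall>i\<in>V. \<forall>t\<in>trees_at T Vt i. \<forall>l\<in>Ls.
       psiT_hat t i l = psiT t i l
         - 1 / real (Max ((\<lambda>t. card (Vt t)) ` T))
           * (smooth_max_marginal \<gamma> Ls (Vt t) (Et t) (psiT t) phi i l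
              - 1 / real (card (trees_at T Vt i))
                * (\<Sum>tb\<in>trees_at T Vt i. smooth_max_marginal \<gamma> Ls (Vt tb) (Et tb) (psiT tb) phi i l))"
  shows "feasible V Ls T Vt psi psiT_hat
    \<and> smooth_dual \<gamma> Ls T Vt Et phi psiT_hat \<le> smooth_dual \<gamma> Ls T Vt Et phi psiT"
proof -
  define N where "N = real (Max ((\<lambda>t. card (Vt t)) ` T))"
  define L where "L t = labelings (Vt t) Ls" for t
  define En where "En t x = tree_energy (Vt t) (Et t) (psiT t) phi x" for t x
  define Eh where "Eh t x = tree_energy (Vt t) (Et t) (psiT_hat t) phi x" for t x
  define mm where "mm t i l = smooth_max_marginal \<gamma> Ls (Vt t) (Et t) (psiT t) phi i l" for t i l
  define TA where "TA i = trees_at T Vt i" for i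
  define avg where "avg i l = 1 / real (card (TA i)) * (\<Sum>tb\<in>TA i. mm tb i l)" for i l
  define S where "S t = (\<Sum>x\<in>L t. exp (En t x / \<gamma>))" for t
  define LA where "LA i = ln (\<Sum>l\<in>Ls. exp (avg i l / \<gamma>))" for i
  have upd': "psiT_hat t i l = psiT t i l - 1 / N * (mm t i l - avg i l)"
    if "i \<in> V" "t \<in> TA i" "l \<in> Ls" for t i l
    using upd that unfolding N_def mm_def avg_def TA_def by blast
  have finTA: "finite (TA i)" for i using finT by (simp add: TA_def trees_at_def)
  have TAne: "TA i \<noteq> {}" if "i \<in> V" for i using cover_V that by (auto simp: TA_def trees_at_def)
  have cardTA: "real (card (TA i)) > 0" if "i \<in> V" for i
    using finTA TAne[OF that] by (simp add: card_gt_0_iff)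
  have feas': "feasible V Ls T Vt psi psiT_hat"
    unfolding feasible_def
  proof (intro ballI)
    fix i l assume i: "i \<in> V" and l: "l \<in> Ls"
    have "(\<Sum>t\<in>trees_at T Vt i. psiT_hat t i l) = (\<Sum>t\<in>TA i. psiT t i l - 1 / N * (mm t i l - avg i l))"
      unfolding TA_def by (rule sum.cong) (use upd' i l in \<open>auto simp: TA_def\<close>)
    also have "\<dots> = (\<Sum>t\<in>TA i. psiT t i l) - 1 / N * ((\<Sum>t\<in>TA i. mm t i l) - real (card (TA i)) * avg i l)"
      by (simp add: sum_subtractf sum_distrib_left sum.distrib flip: sum_divide_distrib)
    also have "real (card (TA i)) * avg i l = (\<Sum>t\<in>TA i. mm t i l)"
      using cardTA[OF i] by (simp add: avg_def)
    also have "(\<Sum>t\<in>TA i. psiT t i l) = psi i l" using feas i l by (simp add: feasible_def TA_def)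
    finally show "(\<Sum>t\<in>trees_at T Vt i. psiT_hat t i l) = psi i l" by simp
  qed
  have dual: "smooth_dual \<gamma> Ls T Vt Et phi psiT_hat \<le> smooth_dual \<gamma> Ls T Vt Et phi psiT"
  proof (cases "T = {}")
    case True then show ?thesis by (simp add: smooth_dual_def)
  next
    case Tne: False
    have tr: "finite (Vt t)" "Vt t \<noteq> {}" "Vt t \<subseteq> V" if "t \<in> T" for t
      using trees that by (auto simp: is_tree_def)
    have nle: "real (card (Vt t)) \<le> N" if "t \<in> T" for t
      unfolding N_def using finT that by (auto intro: Max_ge)
    have npos: "real (card (Vt t)) > 0" if "t \<in> T" for t
      using tr[OF that] by (simp add: card_gt_0_iff)
    obtain t0 where "t0 \<in> T" using Tne by blast
    then have Npos: "N > 0" using nle npos by (meson less_le_trans)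
    have finLt: "finite (L t)" if "t \<in> T" for t
      using tr[OF that] finL by (simp add: L_def labelings_def finite_PiE)
    have Lne: "L t \<noteq> {}" if "t \<in> T" for t
      using tr[OF that] fiber_ne[of _ Ls _ "Vt t"] neL unfolding L_def by blast
    have inTA: "t \<in> TA i" if "t \<in> T" "i \<in> Vt t" for t i
      using that by (simp add: TA_def trees_at_def)
    have mm_eq: "exp (mm t i l / \<gamma>) = (\<Sum>x\<in>{x\<in>L t. x i = l}. exp (En t x / \<gamma>))"
      if "t \<in> T" "i \<in> Vt t" "l \<in> Ls" for t i l
    proof -
      have "finite {x\<in>L t. x i = l}" using finLt[OF that(1)] by simp
      moreover have "{x\<in>L t. x i = l} \<noteq> {}" using fiber_ne[OF that(3) that(2)] by (simp add: L_def)
      ultimately have "(\<Sum>x\<in>{x\<in>L t. x i = l}. exp (En t x / \<gamma>)) > 0" by (intro sum_pos) auto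
      then show ?thesis using gamma_pos
        by (simp add: mm_def smooth_max_marginal_def L_def En_def)
    qed
    have S_eq: "S t = (\<Sum>l\<in>Ls. exp (mm t i l / \<gamma>))" if "t \<in> T" "i \<in> Vt t" for t i
      unfolding S_def L_def using group_label[OF tr(1)[OF that(1)] finL that(2)] mm_eq[OF that]
      by (simp add: L_def)
    have xL: "x i \<in> Ls" if "x \<in> L t" "i \<in> Vt t" for x t i
      using that by (auto simp: L_def labelings_def)
    have Eh_eq: "Eh t x = En t x - 1 / N * (\<Sum>i\<in>Vt t. mm t i (x i) - avg i (x i))"
      if t: "t \<in> T" and x: "x \<in> L t" for t x
    proof -
      have "(\<Sum>i\<in>Vt t. psiT_hat t i (x i)) = (\<Sum>i\<in>Vt t. psiT t i (x i) - 1 / N * (mm t i (x i) - avg i (x i)))"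
        by (rule sum.cong) (use upd' tr(3)[OF t] inTA[OF t] xL[OF x] in auto)
      then show ?thesis
        by (simp add: Eh_def En_def tree_energy_def sum_subtractf sum_distrib_left flip: sum_divide_distrib)
    qed
    have C: "(\<Sum>x\<in>L t. exp ((En t x - (mm t i (x i) - avg i (x i))) / \<gamma>)) = (\<Sum>l\<in>Ls. exp (avg i l / \<gamma>))"
      if t: "t \<in> T" and i: "i \<in> Vt t" for t i
    proof -
      have "(\<Sum>x\<in>L t. exp ((En t x - (mm t i (x i) - avg i (x i))) / \<gamma>))
          = (\<Sum>l\<in>Ls. \<Sum>x\<in>{x\<in>L t. x i = l}. exp ((En t x - (mm t i (x i) - avg i (x i))) / \<gamma>))"
        unfolding L_def by (rule group_label[OF tr(1)[OF t] finL i])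
      also have "\<dots> = (\<Sum>l\<in>Ls. exp ((avg i l - mm t i l) / \<gamma>) * (\<Sum>x\<in>{x\<in>L t. x i = l}. exp (En t x / \<gamma>)))"
        by (rule sum.cong[OF refl]) (auto simp: sum_distrib_left exp_add[symmetric] diff_divide_distrib add_divide_distrib intro!: sum.cong)
      also have "\<dots> = (\<Sum>l\<in>Ls. exp ((avg i l - mm t i l) / \<gamma>) * exp (mm t i l / \<gamma>))"
        using mm_eq[OF t i] by simp
      also have "\<dots> = (\<Sum>l\<in>Ls. exp (avg i l / \<gamma>))"
        by (simp add: exp_add[symmetric] diff_divide_distrib)
      finally show ?thesis .
    qed
    have A: "ln (\<Sum>x\<in>L t. exp (Eh t x / \<gamma>)) \<le> (1 - real (card (Vt t)) / N) * ln (S t) + 1 / N * (\<Sum>i\<in>Vt t. LA i)"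
      if t: "t \<in> T" for t
    proof -
      define K where "K = insert None (Some ` Vt t)"
      define w where "w (k::'v option) = (case k of None \<Rightarrow> 1 - real (card (Vt t)) / N | Some i \<Rightarrow> 1 / N)" for k
      define f where "f (k::'v option) x = (case k of None \<Rightarrow> En t x / \<gamma> | Some i \<Rightarrow> (En t x - (mm t i (x i) - avg i (x i))) / \<gamma>)" for k x
      have nin: "None \<notin> Some ` Vt t" by auto
      have sumK: "sum h K = h None + (\<Sum>i\<in>Vt t. h (Some i))" for h :: "'v option \<Rightarrow> real"
        unfolding K_def using tr(1)[OF t] nin by (simp add: sum.reindex)
      have finK: "finite K" using tr(1)[OF t] by (simp add: K_def)
      have wpos: "\<forall>k\<in>K. w k \<ge> 0" using nle[OF t] Npos by (auto simp: K_def w_def field_simps)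
      have wsum: "sum w K = 1" using Npos by (simp add: sumK w_def field_simps)
      have comb: "(\<Sum>k\<in>K. w k * f k x) = Eh t x / \<gamma>" if x: "x \<in> L t" for x
      proof -
        have "(\<Sum>i\<in>Vt t. 1 / N * ((En t x - (mm t i (x i) - avg i (x i))) / \<gamma>))
            = 1 / N / \<gamma> * (real (card (Vt t)) * En t x - (\<Sum>i\<in>Vt t. mm t i (x i) - avg i (x i)))"
        proof -
          have e: "1 / N * ((En t x - (mm t i (x i) - avg i (x i))) / \<gamma>)
              = 1 / N / \<gamma> * En t x - 1 / N / \<gamma> * (mm t i (x i) - avg i (x i))" for i
            by (simp add: diff_divide_distrib right_diff_distrib)
          have aux: "(\<Sum>i\<in>A. c * e - c * d i) = c * (real (card A) * e - (\<Sum>i\<in>A. d i))" for A c e and d :: "'v \<Rightarrow> real"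
            by (simp add: sum_subtractf sum_distrib_left[symmetric] right_diff_distrib)
          show ?thesis unfolding e by (rule aux)
        qed
        moreover have "(\<Sum>k\<in>K. w k * f k x) = (1 - real (card (Vt t)) / N) * (En t x / \<gamma>)
            + (\<Sum>i\<in>Vt t. 1 / N * ((En t x - (mm t i (x i) - avg i (x i))) / \<gamma>))"
          by (simp add: sumK w_def f_def)
        moreover have "(1 - n / N) * (e / \<gamma>) + 1 / N / \<gamma> * (n * e - D) = (e - 1 / N * D) / \<gamma>" for n e D
          using Npos gamma_pos by (simp add: field_simps)
        ultimately show ?thesis using Eh_eq[OF t x] by simp
      qed
      have "ln (\<Sum>x\<in>L t. exp (Eh t x / \<gamma>)) = ln (\<Sum>x\<in>L t. exp (\<Sum>k\<in>K. w k * f k x))"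
        using comb by simp
      also have "\<dots> \<le> (\<Sum>k\<in>K. w k * ln (\<Sum>x\<in>L t. exp (f k x)))"
        by (rule lse_convex[OF finLt[OF t] Lne[OF t] finK wpos wsum])
      also have "\<dots> = (1 - real (card (Vt t)) / N) * ln (S t) + 1 / N * (\<Sum>i\<in>Vt t. LA i)"
        using C[OF t] by (simp add: sumK w_def f_def S_def LA_def sum_distrib_left)
      finally show ?thesis .
    qed
    have Ev: "real (card (TA i)) * LA i \<le> (\<Sum>t\<in>TA i. ln (S t))" if i: "i \<in> V" for i
    proof -
      have TAT: "t \<in> T" "i \<in> Vt t" if "t \<in> TA i" for t using that by (auto simp: TA_def trees_at_def)
      have "LA i = ln (\<Sum>l\<in>Ls. exp (\<Sum>t\<in>TA i. 1 / real (card (TA i)) * (mm t i l / \<gamma>)))"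
        unfolding LA_def avg_def by (simp add: sum_distrib_left sum_divide_distrib[symmetric])
      also have "\<dots> \<le> (\<Sum>t\<in>TA i. 1 / real (card (TA i)) * ln (\<Sum>l\<in>Ls. exp (mm t i l / \<gamma>)))"
        by (rule lse_convex[OF finL neL finTA]) (use cardTA[OF i] in auto)
      also have "\<dots> = 1 / real (card (TA i)) * (\<Sum>t\<in>TA i. ln (S t))"
        by (simp add: sum_distrib_left) (rule sum.cong[OF refl], simp add: S_eq[OF TAT])
      finally show ?thesis using cardTA[OF i] by (simp add: field_simps)
    qed
    have swap: "(\<Sum>t\<in>T. \<Sum>i\<in>Vt t. g t i) = (\<Sum>i\<in>V. \<Sum>t\<in>TA i. g t i)" for g :: "'t \<Rightarrow> 'v \<Rightarrow> real"
    proof -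
      have "(\<Sum>t\<in>T. \<Sum>i\<in>Vt t. g t i) = (\<Sum>t\<in>T. \<Sum>i\<in>{i\<in>V. i \<in> Vt t}. g t i)"
        by (rule sum.cong[OF refl]) (use tr(3) in \<open>auto intro!: sum.cong\<close>)
      also have "\<dots> = (\<Sum>i\<in>V. \<Sum>t\<in>{t\<in>T. i \<in> Vt t}. g t i)"
        by (rule sum.swap_restrict[OF finT finV])
      finally show ?thesis by (simp add: TA_def trees_at_def)
    qed
    define P where "P = (\<Sum>t\<in>T. \<Sum>i\<in>Vt t. LA i)"
    define Q where "Q = (\<Sum>t\<in>T. real (card (Vt t)) * ln (S t))"
    have PQ: "P \<le> Q"
    proof -
      have "P = (\<Sum>i\<in>V. real (card (TA i)) * LA i)" unfolding P_def swap by simp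
      also have "\<dots> \<le> (\<Sum>i\<in>V. \<Sum>t\<in>TA i. ln (S t))" by (rule sum_mono) (rule Ev)
      also have "\<dots> = Q" unfolding Q_def swap[symmetric] by simp
      finally show ?thesis .
    qed
    have "smooth_dual \<gamma> Ls T Vt Et phi psiT_hat = (\<Sum>t\<in>T. \<gamma> * ln (\<Sum>x\<in>L t. exp (Eh t x / \<gamma>)))"
      by (simp add: smooth_dual_def smooth_max_energy_def L_def Eh_def)
    also have "\<dots> \<le> (\<Sum>t\<in>T. \<gamma> * ((1 - real (card (Vt t)) / N) * ln (S t) + 1 / N * (\<Sum>i\<in>Vt t. LA i)))"
      by (rule sum_mono) (use A gamma_pos in auto)
    also have "\<dots> = (\<Sum>t\<in>T. \<gamma> * ln (S t)) - \<gamma> / N * Q + \<gamma> / N * P"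
      unfolding P_def Q_def
      by (simp add: sum.distrib sum_subtractf sum_distrib_left algebra_simps)
    also have "\<dots> \<le> (\<Sum>t\<in>T. \<gamma> * ln (S t))"
    proof -
      have "\<gamma> / N * P \<le> \<gamma> / N * Q" using PQ gamma_pos Npos by (intro mult_left_mono) auto
      then show ?thesis by simp
    qed
    also have "\<dots> = smooth_dual \<gamma> Ls T Vt Et phi psiT"
      by (simp add: smooth_dual_def smooth_max_energy_def S_def L_def En_def)
    finally show ?thesis .
  qed
  show ?thesis using feas' dual by blast
qed

end
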